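(* Let $\Sigma\in\mathbb{R}^{n\times n}$ be a symmetric positive definite matrix with eigenvalues $\lambda_1,\ldots,\lambda_n$ and condition number $\kappa=\lambda_{\max}/\lambda_{\min}$, where $\lambda_{\max}=\max_i\lambda_i$, $\lambda_{\min}=\min_i\lambda_i$. For $0<D\le\mathrm{tr}(\Sigma)$ let $L>0$ satisfy $\sum_{i=1}^n\min\{L,\lambda_i\}=D$, $D_i=\min\{L,\lambda_i\}$, and $R(D)=\sum_{i=1}^n\frac12\log\frac{\lambda_i}{D_i}$. For $\alpha\in[0,1]$, $D>0$ let $R_\alpha(D)=\frac12\log\det\big(\alpha I+\frac{n}{D}\Sigma\big)$, and let $\alpha^*\in[0,1]$ be the unique value with $R_{\alpha^*}(\mathrm{tr}(\Sigma))=0$. Then for every $D\in(0,\mathrm{tr}(\Sigma)]$, $$\frac12\log\frac1\kappa\le\frac{R_{\alpha^*}(D)-R(D)}{n}\le\frac12\log\Big(2-\frac1\kappa\Big).$$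
   Context: $\log$ denotes the logarithm to a fixed base greater than $1$. $R(D)$ is the mean-square-distortion rate-distortion function of an $n$-dimensional Gaussian vector with covariance $\Sigma$ (reverse water-filling); $I$ is the $n\times n$ identity matrix. *)

theory Defs
  imports Complex_Main "Jordan_Normal_Form.Jordan_Normal_Form"
begin

definition mat_trace :: "real mat \<Rightarrow> real" where
  "mat_trace A = (\<Sum>i<dim_row A. A $$ (i, i))"

definition symmetric_mat :: "real mat \<Rightarrow> bool" where
  "symmetric_mat A \<longleftrightarrow> transpose_mat A = A"

definition pos_def_mat :: "nat \<Rightarrow> real mat \<Rightarrow> bool" where
  "pos_def_mat n A \<longleftrightarrow> A \<in> carrier_mat n n \<and>
     (\<forall>v \<in> carrier_vec n. v \<noteq> 0\<^sub>v n \<longrightarrow> v \<bullet> (A *\<^sub>v v) > 0)"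

definition eigenvalues_mult :: "nat \<Rightarrow> real mat \<Rightarrow> (nat \<Rightarrow> real) \<Rightarrow> bool" where
  "eigenvalues_mult n A lam \<longleftrightarrow> char_poly A = (\<Prod>i<n. [:- lam i, 1:])"

definition R_alpha :: "real \<Rightarrow> nat \<Rightarrow> real mat \<Rightarrow> real \<Rightarrow> real \<Rightarrow> real" where
  "R_alpha b n S alpha D = 1/2 * log b (det (alpha \<cdot>\<^sub>m 1\<^sub>m n + (real n / D) \<cdot>\<^sub>m S))"

text \<open>Reverse water-filling rate-distortion function, given water level L.\<close>
definition R_wf :: "real \<Rightarrow> nat \<Rightarrow> (nat \<Rightarrow> real) \<Rightarrow> real \<Rightarrow> real" where
  "R_wf b n lam L = (\<Sum>i<n. 1/2 * log b (lam i / min L (lam i)))"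

end

theory Submission
  imports Defs "Jordan_Normal_Form.Schur_Decomposition"
begin

lemma prod_list_upt_lam: "(\<Prod>e\<leftarrow>map lam [0..<n]. f e) = (\<Prod>i<n. f (lam i))"
  by (induct n) (simp_all add: lessThan_Suc mult.commute)

lemma trace_comm:
  fixes X Y :: "real mat"
  assumes X: "X \<in> carrier_mat n m" and Y: "Y \<in> carrier_mat m n"
  shows "mat_trace (X * Y) = mat_trace (Y * X)"
proof -
  have "mat_trace (X * Y) = (\<Sum>i<n. \<Sum>k<m. X $$ (i,k) * Y $$ (k,i))"
    unfolding mat_trace_def using X Y
    by (intro sum.cong) (auto simp: scalar_prod_def atLeast0LessThan)
  also have "\<dots> = (\<Sum>k<m. \<Sum>i<n. Y $$ (k,i) * X $$ (i,k))"
    by (subst sum.swap) (simp add: mult.commute)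
  also have "\<dots> = mat_trace (Y * X)"
    unfolding mat_trace_def using X Y
    by (intro sum.cong) (auto simp: scalar_prod_def atLeast0LessThan)
  finally show ?thesis .
qed

lemma trace_eig:
  fixes S :: "real mat"
  assumes S: "S \<in> carrier_mat n n" and c: "char_poly S = (\<Prod>i<n. [:- lam i, 1:])"
  shows "mat_trace S = (\<Sum>i<n. lam i)"
proof -
  define es where "es = map lam [0..<n]"
  have c': "char_poly S = (\<Prod>e\<leftarrow>es. [:- e, 1:])" unfolding es_def prod_list_upt_lam c ..
  obtain B P Q where BPQ: "schur_decomposition S es = (B,P,Q)" by (cases "schur_decomposition S es") auto
  from schur_decomposition[OF S c' BPQ]
  have sim: "similar_mat_wit S B P Q" and dg: "diag_mat B = es" by auto
  from sim S have B: "B \<in> carrier_mat n n" and P: "P \<in> carrier_mat n n" and Q: "Q \<in> carrier_mat n n"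
    and QP: "Q * P = 1\<^sub>m n" and SPBQ: "S = P * B * Q"
    unfolding similar_mat_wit_def Let_def by auto
  have "mat_trace S = mat_trace ((P * B) * Q)" using SPBQ by simp
  also have "\<dots> = mat_trace (Q * (P * B))" using P B Q by (intro trace_comm[of _ n n]) auto
  also have "Q * (P * B) = (Q * P) * B" using P B Q by (simp add: assoc_mult_mat)
  also have "\<dots> = B" using QP B by simp
  also have "mat_trace B = (\<Sum>i<n. lam i)"
  proof -
    have "\<And>i. i < n \<Longrightarrow> B $$ (i,i) = lam i"
    proof -
      fix i assume i: "i < n"
      have "diag_mat B ! i = es ! i" using dg by simp
      thus "B $$ (i,i) = lam i" using i B unfolding diag_mat_def es_def by simp
    qed
    thus ?thesis unfolding mat_trace_def using B by simp
  qed
  finally show ?thesis .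
qed

lemma det_eig:
  fixes S :: "real mat"
  assumes S: "S \<in> carrier_mat n n" and ch: "char_poly S = (\<Prod>i<n. [:- lam i, 1:])" and c: "c \<noteq> 0"
  shows "det (a \<cdot>\<^sub>m 1\<^sub>m n + c \<cdot>\<^sub>m S) = (\<Prod>i<n. a + c * lam i)"
proof -
  define t where "t = - a / c"
  define M where "M = t \<cdot>\<^sub>m 1\<^sub>m n - S"
  have M: "M \<in> carrier_mat n n" unfolding M_def using S by auto
  have "poly (char_poly S) t = det M" unfolding char_poly_def
    by (rule poly_det_cong[OF M], insert S, auto simp: char_poly_matrix_def M_def)
  hence dM: "det M = (\<Prod>i<n. t - lam i)" unfolding ch by (simp add: poly_prod)
  have eq: "a \<cdot>\<^sub>m 1\<^sub>m n + c \<cdot>\<^sub>m S = (- c) \<cdot>\<^sub>m M"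
    by (rule eq_matI) (use S c in \<open>auto simp: M_def t_def field_simps\<close>)
  have "det (a \<cdot>\<^sub>m 1\<^sub>m n + c \<cdot>\<^sub>m S) = (- c) ^ n * (\<Prod>i<n. t - lam i)"
    unfolding eq det_smult dM using M by simp
  also have "\<dots> = (\<Prod>i<n. (- c) * (t - lam i))" by (subst prod.distrib) simp
  also have "\<dots> = (\<Prod>i<n. a + c * lam i)" using c unfolding t_def by (intro prod.cong) (auto simp: field_simps)
  finally show ?thesis .
qed

lemma lam_pos:
  fixes S :: "real mat"
  assumes pd: "pos_def_mat n S" and ch: "char_poly S = (\<Prod>i<n. [:- lam i, 1:])" and i: "i < n"
  shows "lam i > 0"
proof -
  have S: "S \<in> carrier_mat n n" using pd unfolding pos_def_mat_def by auto
  have "poly (char_poly S) (lam i) = 0" unfolding ch poly_prod using i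
    by (intro prod_zero) auto
  hence "eigenvalue S (lam i)" using eigenvalue_root_char_poly[OF S] by simp
  then obtain v where v: "eigenvector S v (lam i)" unfolding eigenvalue_def by auto
  hence vc: "v \<in> carrier_vec n" and v0: "v \<noteq> 0\<^sub>v n" and Sv: "S *\<^sub>v v = lam i \<cdot>\<^sub>v v"
    using S unfolding eigenvector_def by auto
  have "v \<bullet> (S *\<^sub>v v) > 0" using pd vc v0 unfolding pos_def_mat_def by auto
  hence gt: "lam i * (v \<bullet> v) > 0" unfolding Sv using vc by (simp add: scalar_prod_smult_right)
  have "v \<bullet> v \<ge> 0" unfolding scalar_prod_def by (intro sum_nonneg) auto
  thus ?thesis using gt by (simp add: zero_less_mult_iff)
qed
lemma core:
  fixes b :: real and n :: nat and lam :: "nat \<Rightarrow> real" and a D L T :: real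
  assumes b: "b > 1" and n: "n \<ge> 1" and pos: "\<And>i. i < n \<Longrightarrow> lam i > 0"
    and a: "0 \<le> a"
    and T: "T = (\<Sum>i<n. lam i)"
    and prod1: "(\<Prod>i<n. a + real n / T * lam i) = 1"
    and D: "D > 0" and L: "L > 0" "(\<Sum>i<n. min L (lam i)) = D"
  shows "let lmax = Max (lam ` {..<n}); lmin = Min (lam ` {..<n}); kappa = lmax / lmin
         in 1/2 * log b (1 / kappa) \<le> (1/2 * log b (\<Prod>i<n. a + real n / D * lam i) - (\<Sum>i<n. 1/2 * log b (lam i / min L (lam i)))) / real n
          \<and> (1/2 * log b (\<Prod>i<n. a + real n / D * lam i) - (\<Sum>i<n. 1/2 * log b (lam i / min L (lam i)))) / real n \<le> 1/2 * log b (2 - 1 / kappa)"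
proof -
  define lmax where "lmax = Max (lam ` {..<n})"
  define lmin where "lmin = Min (lam ` {..<n})"
  have nne: "{..<n} \<noteq> {}" proof - have "0 \<in> {..<n}" using n by simp thus ?thesis by blast qed
  have fin: "finite (lam ` {..<n})" by simp
  have ne: "lam ` {..<n} \<noteq> {}" proof - have "0 \<in> {..<n}" using n by simp thus ?thesis by blast qed
  have hmax: "lam i \<le> lmax" if "i < n" for i unfolding lmax_def using fin that by auto
  have hmin: "lmin \<le> lam i" if "i < n" for i unfolding lmin_def using fin that by auto
  obtain j where j: "j < n" "lmin = lam j" unfolding lmin_def using Min_in[OF fin ne] by auto
  have lminpos: "lmin > 0" using j pos by auto
  have lminmax: "lmin \<le> lmax" using hmax j by auto
  have lmaxpos: "lmax > 0" using lminpos lminmax by linarith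
  define r where "r = lmin / lmax"
  have kap: "1 / (lmax / lmin) = r" unfolding r_def by simp
  have r0: "r > 0" and r1: "r \<le> 1" unfolding r_def using lminpos lmaxpos lminmax by auto
  have Tle: "T \<le> real n * lmax" unfolding T using sum_bounded_above[of "{..<n}" lam lmax] hmax by auto
  have Tpos: "T > 0" unfolding T using pos nne by (intro sum_pos) auto
  have ha: "a \<le> 1 - r"
  proof (rule ccontr)
    assume "\<not> a \<le> 1 - r"
    define c where "c = a + r"
    have c1: "c > 1" using \<open>\<not> a \<le> 1 - r\<close> unfolding c_def by linarith
    have ci: "c \<le> a + real n / T * lam i" if "i < n" for i
    proof -
      have "r \<le> real n * lmin / T"
        unfolding r_def using Tle Tpos lmaxpos lminpos
        by (simp add: field_simps)
      also have "\<dots> \<le> real n / T * lam i" using hmin[OF that] Tpos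
        by (simp add: field_simps) (metis mult.commute mult_left_mono of_nat_0_le_iff)
      finally show ?thesis unfolding c_def by linarith
    qed
    have "(\<Prod>i<n. c) \<le> (\<Prod>i<n. a + real n / T * lam i)"
      by (rule prod_mono) (use ci c1 in auto)
    moreover have "(\<Prod>i<n. c) > 1" using c1 n by (simp add: one_less_power)
    ultimately show False using prod1 by linarith
  qed
  define Di where "Di i = min L (lam i)" for i
  define A where "A i = (a + real n / D * lam i) * Di i / lam i" for i
  have Dipos: "Di i > 0" if "i < n" for i unfolding Di_def using L pos[OF that] by auto
  have Dile: "Di i \<le> lam i" for i unfolding Di_def by auto
  have Apos: "A i > 0" if "i < n" for i unfolding A_def using Dipos[OF that] pos[OF that] a D n
    by (intro divide_pos_pos mult_pos_pos add_nonneg_pos) auto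
  have fpos: "a + real n / D * lam i > 0" if "i < n" for i using pos[OF that] a D n by (intro add_nonneg_pos) auto
  have lnA: "ln (a + real n / D * lam i) - ln (lam i / Di i) = ln (A i)" if "i < n" for i
    unfolding A_def using fpos[OF that] Dipos[OF that] pos[OF that]
    by (simp add: ln_mult ln_div)
  have lb: "ln b > 0" using b by simp
  have diff: "1/2 * log b (\<Prod>i<n. a + real n / D * lam i) - (\<Sum>i<n. 1/2 * log b (lam i / min L (lam i)))
      = (\<Sum>i<n. ln (A i)) / (2 * ln b)"
  proof -
    have "ln (\<Prod>i<n. a + real n / D * lam i) = (\<Sum>i<n. ln (a + real n / D * lam i))"
      using fpos by (intro ln_prod) (auto dest!: fpos simp del: times_divide_eq_left)
    hence e1: "1/2 * log b (\<Prod>i<n. a + real n / D * lam i) = (\<Sum>i<n. ln (a + real n / D * lam i)) / (2 * ln b)"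
      unfolding log_def by simp
    have e2: "(\<Sum>i<n. 1/2 * log b (lam i / min L (lam i))) = (\<Sum>i<n. ln (lam i / Di i)) / (2 * ln b)"
      unfolding log_def Di_def by (simp add: sum_divide_distrib)
    have "1/2 * log b (\<Prod>i<n. a + real n / D * lam i) - (\<Sum>i<n. 1/2 * log b (lam i / min L (lam i)))
       = ((\<Sum>i<n. ln (a + real n / D * lam i)) - (\<Sum>i<n. ln (lam i / Di i))) / (2 * ln b)"
      unfolding e1 e2 by (rule diff_divide_distrib[symmetric])
    also have "\<dots> = (\<Sum>i<n. ln (A i)) / (2 * ln b)"
      using lnA by (simp add: sum_subtractf[symmetric])
    finally show ?thesis .
  qed
  have Ai_lb: "r \<le> A i" if "i < n" for i
  proof -
    have "lmin * Di k \<le> lmax * Di i" if "k < n" for k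
    proof -
      have "Di k \<le> L" unfolding Di_def by simp
      hence "lmin * Di k \<le> lmax * L" using lminmax lmaxpos Dipos[OF that]
        by (intro mult_mono) auto
      moreover have "lmin * Di k \<le> lmax * lam i"
      proof -
        have "Di k \<le> lmax" using Dile[of k] hmax[OF that] by linarith
        hence "lmin * Di k \<le> lmin * lmax" using lminpos by (simp add: mult_left_mono)
        also have "lmin * lmax \<le> lmax * lam i"
          using mult_right_mono[OF hmin[OF \<open>i<n\<close>], of lmax] lmaxpos by (simp add: mult.commute)
        finally show ?thesis .
      qed
      ultimately show ?thesis by (cases "L \<le> lam i") (simp_all add: Di_def min_def)
    qed
    hence "(\<Sum>k<n. lmin * Di k) \<le> real n * (lmax * Di i)"
      using sum_bounded_above[of "{..<n}" "\<lambda>k. lmin * Di k" "lmax * Di i"] by auto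
    moreover have "(\<Sum>k<n. lmin * Di k) = lmin * D" using L(2) by (simp add: Di_def sum_distrib_left[symmetric])
    ultimately have "lmin * D \<le> real n * (lmax * Di i)" by linarith
    hence "r \<le> real n * Di i / D" unfolding r_def using lmaxpos D by (simp add: field_simps)
    also have "\<dots> = real n / D * lam i * Di i / lam i" using pos[OF that] by simp
    also have "\<dots> \<le> A i" unfolding A_def using pos[OF that] Dipos[OF that] a
      by (intro divide_right_mono mult_right_mono) auto
    finally show ?thesis .
  qed
  define m where "m = 2 - r"
  have m1: "m \<ge> 1" unfolding m_def using r1 by simp
  have sumA: "(\<Sum>i<n. A i) \<le> real n * m"
  proof -
    have "(\<Sum>i<n. A i) = (\<Sum>i<n. a * (Di i / lam i) + real n / D * Di i)"
    proof (rule sum.cong[OF refl])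
      fix i assume "i \<in> {..<n}"
      hence "lam i > 0" using pos by auto
      thus "A i = a * (Di i / lam i) + real n / D * Di i" unfolding A_def using D by (simp add: field_simps)
    qed
    also have "\<dots> = a * (\<Sum>i<n. Di i / lam i) + real n / D * (\<Sum>i<n. Di i)"
      by (simp add: sum.distrib sum_distrib_left)
    also have "(\<Sum>i<n. Di i) = D" using L(2) unfolding Di_def by simp
    also have "(\<Sum>i<n. Di i / lam i) \<le> real n"
      using sum_bounded_above[of "{..<n}" "\<lambda>i. Di i / lam i" 1] Dile pos by auto
    hence "a * (\<Sum>i<n. Di i / lam i) \<le> a * real n" using a by (rule mult_left_mono)
    hence "a * (\<Sum>i<n. Di i / lam i) + real n / D * D \<le> a * real n + real n" using D by simp
    also have "\<dots> \<le> (1 - r) * real n + real n" using ha by (simp add: mult_right_mono)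
    also have "\<dots> = real n * m" unfolding m_def by (simp add: algebra_simps)
    finally show ?thesis .
  qed
  have lnAub: "ln (A i) \<le> ln m + A i / m - 1" if "i < n" for i
  proof -
    have "ln (A i / m) \<le> A i / m - 1" using Apos[OF that] m1 by (intro ln_le_minus_one) auto
    thus ?thesis using Apos[OF that] m1 by (simp add: ln_div)
  qed
  have up: "(\<Sum>i<n. ln (A i)) \<le> real n * ln m"
  proof -
    have "(\<Sum>i<n. ln (A i)) \<le> (\<Sum>i<n. ln m + A i / m - 1)" by (rule sum_mono) (use lnAub in auto)
    also have "\<dots> = real n * ln m + (\<Sum>i<n. A i) / m - real n"
      by (simp add: sum.distrib sum_subtractf sum_divide_distrib)
    also have "(\<Sum>i<n. A i) / m \<le> real n" using sumA m1 by (simp add: field_simps)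
    finally show ?thesis by simp
  qed
  have lo: "real n * ln r \<le> (\<Sum>i<n. ln (A i))"
  proof -
    have "(\<Sum>i<n. ln r) \<le> (\<Sum>i<n. ln (A i))" by (rule sum_mono) (use Ai_lb Apos r0 in simp)
    thus ?thesis by simp
  qed
  have npos: "real n > 0" using n by simp
  have "1/2 * log b r \<le> (\<Sum>i<n. ln (A i)) / (2 * ln b) / real n"
    using lo lb npos unfolding log_def by (simp add: field_simps)
  moreover have "(\<Sum>i<n. ln (A i)) / (2 * ln b) / real n \<le> 1/2 * log b m"
    using up lb npos unfolding log_def by (simp add: field_simps)
  ultimately show ?thesis unfolding Let_def lmax_def[symmetric] lmin_def[symmetric] kap diff
    using m_def by simp
qed

theorem corollary1:
  fixes b :: real and n :: nat and S :: "real mat" and lam :: "nat \<Rightarrow> real"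
    and alpha_star D L :: real
  assumes b: "b > 1"
    and sym: "symmetric_mat S"
    and pd: "pos_def_mat n S"
    and eig: "eigenvalues_mult n S lam"
    and astar: "alpha_star \<in> {0..1}" "R_alpha b n S alpha_star (mat_trace S) = 0"
    and D: "0 < D" "D \<le> mat_trace S"
    and L: "L > 0" "(\<Sum>i<n. min L (lam i)) = D"
  shows "let lmax = Max (lam ` {..<n}); lmin = Min (lam ` {..<n}); kappa = lmax / lmin
         in 1/2 * log b (1 / kappa) \<le> (R_alpha b n S alpha_star D - R_wf b n lam L) / real n
          \<and> (R_alpha b n S alpha_star D - R_wf b n lam L) / real n \<le> 1/2 * log b (2 - 1 / kappa)"
proof -
  have S: "S \<in> carrier_mat n n" using pd unfolding pos_def_mat_def by auto
  have ch: "char_poly S = (\<Prod>i<n. [:- lam i, 1:])" using eig unfolding eigenvalues_mult_def .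
  have n: "n \<ge> 1"
  proof (rule ccontr)
    assume "\<not> n \<ge> 1"
    hence "n = 0" by simp
    hence "mat_trace S = 0" using S unfolding mat_trace_def by simp
    thus False using D by simp
  qed
  have pos: "\<And>i. i < n \<Longrightarrow> lam i > 0" using lam_pos[OF pd ch] .
  define T where "T = mat_trace S"
  have T: "T = (\<Sum>i<n. lam i)" using trace_eig[OF S ch] T_def by simp
  have nne: "{..<n} \<noteq> {}" proof - have "0 \<in> {..<n}" using n by simp thus ?thesis by blast qed
  have Tpos: "T > 0" unfolding T using pos nne by (intro sum_pos) auto
  have a0: "0 \<le> alpha_star" using astar(1) by simp
  have det: "det (alpha_star \<cdot>\<^sub>m 1\<^sub>m n + (real n / DD) \<cdot>\<^sub>m S) = (\<Prod>i<n. alpha_star + real n / DD * lam i)"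
    if "DD > 0" for DD
    using det_eig[OF S ch, of "real n / DD" alpha_star] n that by simp
  have ppos: "(\<Prod>i<n. alpha_star + real n / T * lam i) > 0"
    using pos a0 Tpos n by (intro prod_pos) (auto intro!: add_nonneg_pos)
  have "log b (\<Prod>i<n. alpha_star + real n / T * lam i) = 0"
    using astar(2) det[OF Tpos] unfolding R_alpha_def T_def by simp
  hence "ln (\<Prod>i<n. alpha_star + real n / T * lam i) = 0" using b unfolding log_def by simp
  hence prod1: "(\<Prod>i<n. alpha_star + real n / T * lam i) = 1" using ppos by simp
  show ?thesis unfolding R_alpha_def R_wf_def det[OF D(1)]
    by (rule core[OF b n pos a0 T prod1 D(1) L])
qed

end
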